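(* Let $X_1,X_2$ be complex Banach spaces and $X:=X_1\times X_2$. Let $A:\mathcal{D}(A)\subset X_1\to X_1$ and $D:\mathcal{D}(D)\subset X_2\to X_2$ be closed operators, let $B:\mathcal{D}(B)\subset X_2\to X_1$ be relatively $D$-bounded and $C:\mathcal{D}(C)\subset X_1\to X_2$ be relatively $A$-bounded. Consider the operator matrix \[ \mathbb{A}=\begin{pmatrix} A & B\\ C & D\end{pmatrix}:\mathcal{D}(A)\times\mathcal{D}(D)\subset X\to X,\qquad \mathbb{A}(x_1,x_2)=(Ax_1+Bx_2,\;Cx_1+Dx_2), \] and assume that $\mathbb{A}$ is closed on $\mathcal{D}(A)\times\mathcal{D}(D)$. Then \[ \sigma(\mathbb{A})\subset \sigma(A)\cup\sigma(D)\cup\big\{\lambda\in\mathbb{C}\setminus(\sigma(A)\cup\sigma(D)) : \mathcal{R}_{21}(\lambda)\ge 1\big\}, \] where $\mathcal{R}_{21}(\lambda):=\|B(\lambda-D)^{-1}C(\lambda-A)^{-1}\|$ (operator norm on $X_1$).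
   Context: An operator $C:\mathcal{D}(C)\subset Y\to Z$ between Banach spaces is relatively $A$-bounded (for $A:\mathcal{D}(A)\subset Y\to Y$) if $\mathcal{D}(A)\subset\mathcal{D}(C)$ and there exist $\alpha,\beta\ge 0$ with $\|Cx\|\le\alpha\|x\|+\beta\|Ax\|$ for all $x\in\mathcal{D}(A)$. For a linear operator $T:\mathcal{D}(T)\subset Y\to Y$, the spectrum $\sigma(T)$ is the set of $\lambda\in\mathbb{C}$ such that $\lambda-T:\mathcal{D}(T)\to Y$ is not bijective with bounded inverse. *)

theory Defs
  imports "HOL-Analysis.Analysis"
begin

class complex_vector = real_vector +
  fixes scaleC :: "complex \<Rightarrow> 'a \<Rightarrow> 'a"  (infixr \<open>*\<^sub>C\<close> 75)
  assumes scaleC_add_right: "a *\<^sub>C (x + y) = a *\<^sub>C x + a *\<^sub>C y"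
    and scaleC_add_left: "(a + b) *\<^sub>C x = a *\<^sub>C x + b *\<^sub>C x"
    and scaleC_scaleC: "a *\<^sub>C (b *\<^sub>C x) = (a * b) *\<^sub>C x"
    and scaleC_one: "1 *\<^sub>C x = x"
    and scaleR_scaleC: "r *\<^sub>R x = complex_of_real r *\<^sub>C x"

class complex_normed_vector = complex_vector + real_normed_vector +
  assumes norm_scaleC: "norm (a *\<^sub>C x) = cmod a * norm x"

instantiation prod :: (complex_vector, complex_vector) complex_vector
begin
definition scaleC_prod_def: "a *\<^sub>C x = (a *\<^sub>C fst x, a *\<^sub>C snd x)"
instance
  by standard (auto simp: scaleC_prod_def scaleC_add_right scaleC_add_left
      scaleC_scaleC scaleC_one scaleR_scaleC prod_eq_iff)
end

definition complex_subspace :: "'a::complex_vector set \<Rightarrow> bool" where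
  "complex_subspace S \<longleftrightarrow> 0 \<in> S \<and> (\<forall>x\<in>S. \<forall>y\<in>S. x + y \<in> S) \<and> (\<forall>c. \<forall>x\<in>S. c *\<^sub>C x \<in> S)"

text \<open>A linear operator T with domain Dom (values of T outside Dom are irrelevant).\<close>
definition lin_op :: "'a::complex_vector set \<Rightarrow> ('a \<Rightarrow> 'b::complex_vector) \<Rightarrow> bool" where
  "lin_op Dom T \<longleftrightarrow> complex_subspace Dom \<and>
     (\<forall>x\<in>Dom. \<forall>y\<in>Dom. T (x + y) = T x + T y) \<and>
     (\<forall>c. \<forall>x\<in>Dom. T (c *\<^sub>C x) = c *\<^sub>C T x)"

definition closed_op :: "'a::{complex_vector,real_normed_vector} set \<Rightarrow> ('a \<Rightarrow> 'b::{complex_vector,real_normed_vector}) \<Rightarrow> bool" where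
  "closed_op Dom T \<longleftrightarrow> lin_op Dom T \<and> closed {(x, T x) | x. x \<in> Dom}"

definition rel_bounded ::
  "'a::real_normed_vector set \<Rightarrow> ('a \<Rightarrow> 'a) \<Rightarrow> 'a set \<Rightarrow> ('a \<Rightarrow> 'b::real_normed_vector) \<Rightarrow> bool" where
  "rel_bounded DA A DC C \<longleftrightarrow> DA \<subseteq> DC \<and>
     (\<exists>\<alpha> \<beta>. \<alpha> \<ge> 0 \<and> \<beta> \<ge> 0 \<and> (\<forall>x\<in>DA. norm (C x) \<le> \<alpha> * norm x + \<beta> * norm (A x)))"

definition resolvent_op :: "'a::complex_vector set \<Rightarrow> ('a \<Rightarrow> 'a) \<Rightarrow> complex \<Rightarrow> 'a \<Rightarrow> 'a" where
  "resolvent_op Dom T lam = inv_into Dom (\<lambda>x. lam *\<^sub>C x - T x)"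

definition op_spectrum :: "'a::{complex_vector,real_normed_vector} set \<Rightarrow> ('a \<Rightarrow> 'a) \<Rightarrow> complex set" where
  "op_spectrum Dom T = {lam. \<not> (bij_betw (\<lambda>x. lam *\<^sub>C x - T x) Dom UNIV \<and>
                                 bounded_linear (resolvent_op Dom T lam))}"

definition op_matrix :: "('a \<Rightarrow> 'a::plus) \<Rightarrow> ('b \<Rightarrow> 'a) \<Rightarrow> ('a \<Rightarrow> 'b::plus) \<Rightarrow> ('b \<Rightarrow> 'b) \<Rightarrow> 'a \<times> 'b \<Rightarrow> 'a \<times> 'b" where
  "op_matrix A B C D = (\<lambda>(x1, x2). (A x1 + B x2, C x1 + D x2))"

definition R21 :: "'a::{complex_vector,real_normed_vector} set \<Rightarrow> ('a \<Rightarrow> 'a) \<Rightarrow> ('b \<Rightarrow> 'a) \<Rightarrow> ('a \<Rightarrow> 'b)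
    \<Rightarrow> 'b::{complex_vector,real_normed_vector} set \<Rightarrow> ('b \<Rightarrow> 'b) \<Rightarrow> complex \<Rightarrow> real" where
  "R21 DA A B C DD D lam = onorm (\<lambda>x. B (resolvent_op DD D lam (C (resolvent_op DA A lam x))))"

end

theory Submission
  imports Defs
begin

lemma bl_add: "bounded_linear f \<Longrightarrow> f (x + y) = f x + f y"
  by (simp add: linear_add bounded_linear.linear)
lemma bl_scale: "bounded_linear f \<Longrightarrow> f (r *\<^sub>R x) = r *\<^sub>R f x"
  by (simp add: linear_scale bounded_linear.linear)
lemma bl_diff: "bounded_linear f \<Longrightarrow> f (x - y) = f x - f y"
  by (simp add: linear_diff bounded_linear.linear)

lemma scaleC_zero_right[simp]: "c *\<^sub>C (0::'a::complex_vector) = 0"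
proof -
  have "c *\<^sub>C (0::'a) = c *\<^sub>C (0 + 0)" by simp
  also have "\<dots> = c *\<^sub>C 0 + c *\<^sub>C 0" by (rule scaleC_add_right)
  finally show ?thesis by simp
qed

lemma scaleC_minus_right: "c *\<^sub>C (- (x::'a::complex_vector)) = - (c *\<^sub>C x)"
proof -
  have "c *\<^sub>C x + c *\<^sub>C (-x) = c *\<^sub>C (x + - x)" by (rule scaleC_add_right[symmetric])
  also have "\<dots> = 0" by simp
  finally show ?thesis by (simp add: eq_neg_iff_add_eq_0 add.commute)
qed

lemma scaleC_diff_right: "c *\<^sub>C ((x::'a::complex_vector) - y) = c *\<^sub>C x - c *\<^sub>C y"
  by (simp only: diff_conv_add_uminus scaleC_add_right scaleC_minus_right)

lemma subspace_diff:
  assumes "complex_subspace S" "x \<in> S" "y \<in> S" shows "x - y \<in> S"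
proof -
  have e: "(-1::complex) *\<^sub>C y = - y" using scaleR_scaleC[of "-1" y] by simp
  have "(-1::complex) *\<^sub>C y \<in> S" using assms unfolding complex_subspace_def by blast
  hence "- y \<in> S" using e by simp
  hence "x + - y \<in> S" using assms unfolding complex_subspace_def by blast
  thus ?thesis by simp
qed

lemma lin_op_shift:
  assumes "lin_op Dom T"
  shows "lin_op Dom (\<lambda>x. lam *\<^sub>C x - T x)"
proof -
  have sub: "complex_subspace Dom" and add: "\<forall>x\<in>Dom. \<forall>y\<in>Dom. T (x + y) = T x + T y"
    and sc: "\<forall>c. \<forall>x\<in>Dom. T (c *\<^sub>C x) = c *\<^sub>C T x" using assms unfolding lin_op_def by blast+
  have "lam *\<^sub>C (x + y) - T (x + y) = (lam *\<^sub>C x - T x) + (lam *\<^sub>C y - T y)"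
    if "x \<in> Dom" "y \<in> Dom" for x y
  proof -
    have "T (x + y) = T x + T y" using add that by blast
    thus ?thesis by (simp add: scaleC_add_right)
  qed
  moreover have "lam *\<^sub>C (c *\<^sub>C x) - T (c *\<^sub>C x) = c *\<^sub>C (lam *\<^sub>C x - T x)"
    if "x \<in> Dom" for c x
  proof -
    have "T (c *\<^sub>C x) = c *\<^sub>C T x" using sc that by blast
    moreover have "lam *\<^sub>C (c *\<^sub>C x) = c *\<^sub>C (lam *\<^sub>C x)"
      by (simp only: scaleC_scaleC mult.commute)
    ultimately show ?thesis by (simp only: scaleC_diff_right)
  qed
  ultimately show ?thesis using sub unfolding lin_op_def by blast
qed

lemma inv_bl:
  fixes S :: "'a::{complex_vector,real_normed_vector} \<Rightarrow> 'b::{complex_vector,real_normed_vector}"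
  assumes lin: "lin_op Dom S" and bij: "bij_betw S Dom UNIV"
    and bd: "\<forall>w\<in>Dom. norm w \<le> M * norm (S w)"
  shows "bounded_linear (inv_into Dom S)"
proof -
  let ?R = "inv_into Dom S"
  have inj: "inj_on S Dom" using bij unfolding bij_betw_def by blast
  have img: "S ` Dom = UNIV" using bij unfolding bij_betw_def by blast
  have R1: "?R y \<in> Dom" for y using img by (simp add: inv_into_into)
  have R2: "S (?R y) = y" for y using img by (simp add: f_inv_into_f)
  have sub: "complex_subspace Dom" using lin unfolding lin_op_def by blast
  have addS: "\<forall>x\<in>Dom. \<forall>y\<in>Dom. S (x + y) = S x + S y" using lin unfolding lin_op_def by blast
  have scS: "\<forall>c. \<forall>x\<in>Dom. S (c *\<^sub>C x) = c *\<^sub>C S x" using lin unfolding lin_op_def by blast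
  have addD: "\<forall>x\<in>Dom. \<forall>y\<in>Dom. x + y \<in> Dom" using sub unfolding complex_subspace_def by blast
  have scD: "\<forall>c. \<forall>x\<in>Dom. c *\<^sub>C x \<in> Dom" using sub unfolding complex_subspace_def by blast
  show ?thesis
  proof (rule bounded_linear_intro[where K = M])
    fix x y
    have "S (?R x + ?R y) = x + y" using addS R1 R2 by simp
    hence "?R (x + y) = ?R (S (?R x + ?R y))" by simp
    also have "\<dots> = ?R x + ?R y" using inj addD R1 by (simp add: inv_into_f_f)
    finally show "?R (x + y) = ?R x + ?R y" .
  next
    fix r x
    have e: "scaleR r (?R x) = complex_of_real r *\<^sub>C ?R x" by (rule scaleR_scaleC)
    have "S (complex_of_real r *\<^sub>C ?R x) = complex_of_real r *\<^sub>C x" using scS R1 R2 by simp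
    also have "\<dots> = scaleR r x" by (simp add: scaleR_scaleC)
    finally have "?R (scaleR r x) = ?R (S (complex_of_real r *\<^sub>C ?R x))" by simp
    also have "\<dots> = complex_of_real r *\<^sub>C ?R x" using inj scD R1 by (simp add: inv_into_f_f)
    finally show "?R (scaleR r x) = scaleR r (?R x)" using e by simp
  next
    fix x have "norm (?R x) \<le> M * norm (S (?R x))" using bd R1 by blast
    thus "norm (?R x) \<le> norm x * M" using R2 by (simp add: mult.commute)
  qed
qed

lemma res_facts:
  assumes "lam \<notin> op_spectrum Dom T"
  shows "bounded_linear (resolvent_op Dom T lam)"
    and "resolvent_op Dom T lam y \<in> Dom"
    and "lam *\<^sub>C resolvent_op Dom T lam y - T (resolvent_op Dom T lam y) = y"
    and "x \<in> Dom \<Longrightarrow> resolvent_op Dom T lam (lam *\<^sub>C x - T x) = x"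
proof -
  have b: "bij_betw (\<lambda>x. lam *\<^sub>C x - T x) Dom UNIV" and bl: "bounded_linear (resolvent_op Dom T lam)"
    using assms unfolding op_spectrum_def by auto
  have inj: "inj_on (\<lambda>x. lam *\<^sub>C x - T x) Dom" and img: "(\<lambda>x. lam *\<^sub>C x - T x) ` Dom = UNIV"
    using b unfolding bij_betw_def by blast+
  show "bounded_linear (resolvent_op Dom T lam)" by (rule bl)
  show "resolvent_op Dom T lam y \<in> Dom" unfolding resolvent_op_def using img by (simp add: inv_into_into)
  show "lam *\<^sub>C resolvent_op Dom T lam y - T (resolvent_op Dom T lam y) = y"
    unfolding resolvent_op_def using img f_inv_into_f[of y "\<lambda>x. lam *\<^sub>C x - T x" Dom] by simp
  show "x \<in> Dom \<Longrightarrow> resolvent_op Dom T lam (lam *\<^sub>C x - T x) = x"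
    unfolding resolvent_op_def using inj inv_into_f_f[of "\<lambda>x. lam *\<^sub>C x - T x" Dom x] by simp
qed

lemma comp_rel:
  fixes R :: "'a::complex_normed_vector \<Rightarrow> 'a" and C :: "'a \<Rightarrow> 'b::complex_normed_vector"
  assumes lin: "lin_op DC C" and rb: "rel_bounded DA A DC C" and bl: "bounded_linear R"
    and inD: "\<And>y. R y \<in> DA" and eq: "\<And>y. lam *\<^sub>C R y - A (R y) = y"
  shows "bounded_linear (\<lambda>y. C (R y))"
proof -
  obtain \<alpha> \<beta> where sub: "DA \<subseteq> DC" and a0: "\<alpha> \<ge> 0" and b0: "\<beta> \<ge> 0"
    and bd: "\<forall>x\<in>DA. norm (C x) \<le> \<alpha> * norm x + \<beta> * norm (A x)"
    using rb unfolding rel_bounded_def by blast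
  have inC: "R y \<in> DC" for y using sub inD by blast
  have addC: "\<forall>x\<in>DC. \<forall>y\<in>DC. C (x + y) = C x + C y" using lin unfolding lin_op_def by blast
  have scC: "\<forall>c. \<forall>x\<in>DC. C (c *\<^sub>C x) = c *\<^sub>C C x" using lin unfolding lin_op_def by blast
  let ?o = "onorm R"
  have o0: "?o \<ge> 0" using onorm_pos_le[OF bl] .
  show ?thesis
  proof (rule bounded_linear_intro[where K = "\<alpha> * ?o + \<beta> * (cmod lam * ?o + 1)"])
    fix x y
    show "C (R (x + y)) = C (R x) + C (R y)"
      using addC inC by (simp add: bl_add[OF bl])
  next
    fix r x
    have "C (R (scaleR r x)) = C (complex_of_real r *\<^sub>C R x)"
      by (subst bl_scale[OF bl]) (simp add: scaleR_scaleC)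
    also have "\<dots> = complex_of_real r *\<^sub>C C (R x)" using scC inC by simp
    finally show "C (R (scaleR r x)) = scaleR r (C (R x))" by (simp add: scaleR_scaleC)
  next
    fix y
    have h1: "norm (R y) \<le> ?o * norm y" using onorm[OF bl] .
    have "A (R y) = lam *\<^sub>C R y - y" using eq[of y] by (simp add: algebra_simps)
    hence h2: "norm (A (R y)) \<le> cmod lam * norm (R y) + norm y"
      using norm_triangle_ineq4[of "lam *\<^sub>C R y" y] by (simp add: norm_scaleC)
    have h3: "norm (C (R y)) \<le> \<alpha> * norm (R y) + \<beta> * norm (A (R y))" using bd inD by blast
    have h4: "\<alpha> * norm (R y) \<le> \<alpha> * (?o * norm y)" using h1 a0 by (simp add: mult_left_mono)
    have h5: "cmod lam * norm (R y) \<le> cmod lam * (?o * norm y)" using h1 by (simp add: mult_left_mono)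
    have h6: "\<beta> * norm (A (R y)) \<le> \<beta> * (cmod lam * (?o * norm y) + norm y)"
      using h2 h5 b0 by (intro mult_left_mono) auto
    have "\<alpha> * (?o * norm y) + \<beta> * (cmod lam * (?o * norm y) + norm y)
        = norm y * (\<alpha> * ?o + \<beta> * (cmod lam * ?o + 1))" by (simp add: algebra_simps)
    thus "norm (C (R y)) \<le> norm y * (\<alpha> * ?o + \<beta> * (cmod lam * ?o + 1))" using h3 h4 h6 by linarith
  qed
qed

theorem theorem1p1:
  fixes DA :: "'a::{complex_normed_vector,banach} set" and A :: "'a \<Rightarrow> 'a"
    and DD :: "'b::{complex_normed_vector,banach} set" and D :: "'b \<Rightarrow> 'b"
    and DB :: "'b set" and B :: "'b \<Rightarrow> 'a"
    and DC :: "'a set" and C :: "'a \<Rightarrow> 'b"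
  assumes "closed_op DA A" and "closed_op DD D"
    and "lin_op DB B" and "rel_bounded DD D DB B"
    and "lin_op DC C" and "rel_bounded DA A DC C"
    and "closed_op (DA \<times> DD) (op_matrix A B C D)"
  shows "op_spectrum (DA \<times> DD) (op_matrix A B C D) \<subseteq>
           op_spectrum DA A \<union> op_spectrum DD D \<union>
           {lam. lam \<notin> op_spectrum DA A \<union> op_spectrum DD D \<and> R21 DA A B C DD D lam \<ge> 1}"
proof
  fix lam assume lamM: "lam \<in> op_spectrum (DA \<times> DD) (op_matrix A B C D)"
  show "lam \<in> op_spectrum DA A \<union> op_spectrum DD D \<union>
           {lam. lam \<notin> op_spectrum DA A \<union> op_spectrum DD D \<and> R21 DA A B C DD D lam \<ge> 1}"
  proof (rule ccontr)
    assume "\<not> ?thesis"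
    hence nA: "lam \<notin> op_spectrum DA A" and nD: "lam \<notin> op_spectrum DD D"
      and k1: "R21 DA A B C DD D lam < 1" by auto
    define RA where "RA = resolvent_op DA A lam"
    define RD where "RD = resolvent_op DD D lam"
    note A1 = res_facts[OF nA, folded RA_def]
    note D1 = res_facts[OF nD, folded RD_def]
    have blRA: "bounded_linear RA" by (rule A1(1))
    have blRD: "bounded_linear RD" by (rule D1(1))
    have blCR: "bounded_linear (\<lambda>y. C (RA y))"
      by (rule comp_rel[OF assms(5) assms(6) A1(1) A1(2) A1(3)])
    have blBR: "bounded_linear (\<lambda>y. B (RD y))"
      by (rule comp_rel[OF assms(3) assms(4) D1(1) D1(2) D1(3)])
    define CR where "CR = (\<lambda>y. C (RA y))"
    define BR where "BR = (\<lambda>y. B (RD y))"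
    define K where "K = (\<lambda>x. BR (CR x))"
    have blK: "bounded_linear K" unfolding K_def CR_def BR_def
      using bounded_linear_compose[OF blBR blCR] by simp
    define k where "k = onorm K"
    have kK: "R21 DA A B C DD D lam = k"
      unfolding k_def K_def BR_def CR_def RA_def RD_def R21_def by simp
    have k0: "0 \<le> k" unfolding k_def by (rule onorm_pos_le[OF blK])
    have kl: "k < 1" using k1 kK by simp
    have nK: "norm (K x) \<le> k * norm x" for x unfolding k_def by (rule onorm[OF blK])
    have blCR': "bounded_linear CR" using blCR CR_def by simp
    have blBR': "bounded_linear BR" using blBR BR_def by simp
    define oA where "oA = onorm RA"
    define oD where "oD = onorm RD"
    define oC where "oC = onorm CR"
    define oB where "oB = onorm BR"
    have oA0: "oA \<ge> 0" unfolding oA_def by (rule onorm_pos_le[OF blRA])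
    have oD0: "oD \<ge> 0" unfolding oD_def by (rule onorm_pos_le[OF blRD])
    have oC0: "oC \<ge> 0" unfolding oC_def by (rule onorm_pos_le[OF blCR'])
    have oB0: "oB \<ge> 0" unfolding oB_def by (rule onorm_pos_le[OF blBR'])
    have nRA: "norm (RA x) \<le> oA * norm x" for x unfolding oA_def by (rule onorm[OF blRA])
    have nRD: "norm (RD x) \<le> oD * norm x" for x unfolding oD_def by (rule onorm[OF blRD])
    have nCR: "norm (CR x) \<le> oC * norm x" for x unfolding oC_def by (rule onorm[OF blCR'])
    have nBR: "norm (BR x) \<le> oB * norm x" for x unfolding oB_def by (rule onorm[OF blBR'])
    define S where "S = (\<lambda>x. lam *\<^sub>C x - op_matrix A B C D x)"
    have Sform: "S (x1, x2) = ((lam *\<^sub>C x1 - A x1) - B x2, (lam *\<^sub>C x2 - D x2) - C x1)" for x1 x2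
      unfolding S_def op_matrix_def by (simp add: scaleC_prod_def algebra_simps)
    have linM: "lin_op (DA \<times> DD) (op_matrix A B C D)"
      using assms(7) unfolding closed_op_def by (rule conjunct1)
    have linS: "lin_op (DA \<times> DD) S"
      unfolding S_def by (rule lin_op_shift[OF linM])
    define c1 where "c1 = (1 + oB) / (1 - k)"
    have c10: "c1 \<ge> 0" unfolding c1_def using oB0 kl by simp
    define Mc where "Mc = oA * c1 + oD * (1 + oC * c1)"
    have bound: "norm (x1, x2) \<le> Mc * norm (S (x1, x2))" if x1: "x1 \<in> DA" and x2: "x2 \<in> DD" for x1 x2
    proof -
      define y where "y = S (x1, x2)"
      define n where "n = norm y"
      define u where "u = lam *\<^sub>C x1 - A x1"
      have y1: "fst y = u - B x2" unfolding y_def u_def Sform by simp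
      have y2: "snd y = (lam *\<^sub>C x2 - D x2) - C x1" unfolding y_def Sform by simp
      have ny1: "norm (fst y) \<le> n" unfolding n_def using norm_fst_le[of "fst y" "snd y"] by simp
      have ny2: "norm (snd y) \<le> n" unfolding n_def using norm_snd_le[of "snd y" "fst y"] by simp
      have ex1: "x1 = RA u" unfolding u_def using A1(4)[OF x1] by simp
      have "lam *\<^sub>C x2 - D x2 = snd y + CR u" using y2 ex1 unfolding CR_def by simp
      hence ex2: "x2 = RD (snd y + CR u)" using D1(4)[OF x2] by simp
      have Bx2: "B x2 = BR (snd y) + K u"
        unfolding K_def ex2 BR_def using bl_add[OF blBR[unfolded BR_def]] by simp
      have ueq: "u = fst y + BR (snd y) + K u" using y1 Bx2 by simp
      have nueq: "norm u = norm (fst y + BR (snd y) + K u)" using arg_cong[OF ueq, of norm] .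
      have "norm u \<le> norm (fst y) + norm (BR (snd y)) + norm (K u)"
        using nueq norm_triangle_ineq[of "fst y + BR (snd y)" "K u"]
          norm_triangle_ineq[of "fst y" "BR (snd y)"] by linarith
      also have "\<dots> \<le> n + oB * n + k * norm u"
        using ny1 nBR[of "snd y"] mult_left_mono[OF ny2 oB0] nK[of u] by linarith
      finally have nu0: "norm u * (1 - k) \<le> (1 + oB) * n" by (simp add: algebra_simps)
      have "norm u \<le> ((1 + oB) * n) / (1 - k)"
        using nu0 kl by (subst pos_le_divide_eq) auto
      hence nu: "norm u \<le> c1 * n" unfolding c1_def by simp
      have nx1: "norm x1 \<le> oA * (c1 * n)"
        using ex1 nRA[of u] mult_left_mono[OF nu oA0] by simp
      have "norm (snd y + CR u) \<le> n + oC * (c1 * n)"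
        using norm_triangle_ineq[of "snd y" "CR u"] ny2 nCR[of u] mult_left_mono[OF nu oC0] by linarith
      hence "oD * norm (snd y + CR u) \<le> oD * (n + oC * (c1 * n))" using oD0 by (rule mult_left_mono)
      hence nx2: "norm x2 \<le> oD * (n + oC * (c1 * n))"
        using ex2 nRD[of "snd y + CR u"] by simp
      have "norm (x1, x2) \<le> norm x1 + norm x2" by (rule norm_Pair_le)
      also have "\<dots> \<le> oA * (c1 * n) + oD * (n + oC * (c1 * n))" using nx1 nx2 by linarith
      also have "\<dots> = Mc * n" unfolding Mc_def by (simp add: algebra_simps)
      finally show ?thesis unfolding n_def y_def .
    qed
    have boundw: "\<forall>w\<in>DA \<times> DD. norm w \<le> Mc * norm (S w)" using bound by auto
    have subD: "complex_subspace (DA \<times> DD)" using linS unfolding lin_op_def by blast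
    have addS: "\<forall>x\<in>DA \<times> DD. \<forall>y\<in>DA \<times> DD. S (x + y) = S x + S y" using linS unfolding lin_op_def by blast
    have inj: "inj_on S (DA \<times> DD)"
    proof (rule inj_onI)
      fix x z assume x: "x \<in> DA \<times> DD" and z: "z \<in> DA \<times> DD" and e: "S x = S z"
      have d: "x - z \<in> DA \<times> DD" by (rule subspace_diff[OF subD x z])
      have "S x = S ((x - z) + z)" by simp
      also have "\<dots> = S (x - z) + S z" by (rule bspec[OF bspec[OF addS d] z])
      finally have "S (x - z) = 0" using e by simp
      hence "norm (x - z) \<le> 0" using boundw d by fastforce
      thus "x = z" by simp
    qed
    have surj: "S ` (DA \<times> DD) = UNIV"
    proof (intro set_eqI iffI)
      fix y :: "'a \<times> 'b" 
      define f where "f = fst y + BR (snd y)"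
      have "\<forall>u v. dist (f + K u) (f + K v) \<le> k * dist u v"
      proof (intro allI)
        fix u v
        have "dist (f + K u) (f + K v) = norm (K (u - v))"
          by (simp add: dist_norm bl_diff[OF blK])
        also have "\<dots> \<le> k * dist u v" using nK by (simp add: dist_norm)
        finally show "dist (f + K u) (f + K v) \<le> k * dist u v" .
      qed
      then obtain u where fu: "f + K u = u" using banach_fix_type[OF k0 kl, of "\<lambda>u. f + K u"] by blast
      define x1 where "x1 = RA u"
      define x2 where "x2 = RD (snd y + CR u)"
      have x1D: "x1 \<in> DA" unfolding x1_def by (rule A1(2))
      have x2D: "x2 \<in> DD" unfolding x2_def by (rule D1(2))
      have e1: "lam *\<^sub>C x1 - A x1 = u" unfolding x1_def by (rule A1(3))
      have e2: "lam *\<^sub>C x2 - D x2 = snd y + C x1" unfolding x2_def x1_def CR_def by (rule D1(3))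
      have Bx2: "B x2 = BR (snd y) + K u"
        unfolding K_def x2_def BR_def using bl_add[OF blBR] by simp
      have "S (x1, x2) = y" unfolding Sform e1 e2 Bx2 using fu f_def
        by (simp add: prod_eq_iff algebra_simps)
      thus "y \<in> S ` (DA \<times> DD)" using x1D x2D by blast
    qed simp
    have bij: "bij_betw S (DA \<times> DD) UNIV" using inj surj unfolding bij_betw_def by blast
    have "bounded_linear (resolvent_op (DA \<times> DD) (op_matrix A B C D) lam)"
      unfolding resolvent_op_def using inv_bl[OF linS bij boundw] S_def by simp
    hence "lam \<notin> op_spectrum (DA \<times> DD) (op_matrix A B C D)"
      using bij unfolding op_spectrum_def S_def by simp
    thus False using lamM by simp
  qed
qed

end
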